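(* Let $b\in\{0,1\}^d$ and let $q$ be the simple gradient associated with $b$. Then $H_{\bar b}(q)=0$ (equivalently $N_{\bar b}(q)=1$) for every bitmap $\bar b\ge b$.
   Context: Jackson network with a tree topology on nodes $\{1,\dots,d\}$, root node $1$; $i\to j$ means node $j$ is a child of node $i$. Customers arrive from outside only at node $1$, with rate $\lambda>0$. For $i\to j$, $\mu_{i,j}>0$ is the rate at which node $i$ serves customers and sends them to node $j$; $\mu_{i,0}\ge 0$ is the rate at which node $i$ serves customers who then leave the system. Let $\mu_i=\sum_{k:i\to k}\mu_{i,k}+\mu_{i,0}>0$. Arrival rates: $\Lambda_1=\lambda$ and $\Lambda_j=\Lambda_i\mu_{i,j}/\mu_i$ if $i\to j$. Utilities $\rho_i=\Lambda_i/\mu_i$, assumed to satisfy $\max_i\rho_i<1$; also $\lambda+\sum_i\mu_i=1$. Let $\mu'_{i,0}=\Lambda_i\mu_{i,0}/\mu_i$. A bitmap $b\in\{0,1\}^d$ encodes which nodes are nonempty ($b(i)=1$) or empty ($b(i)=0$); $b'\ge b$ means $b'(i)\ge b(i)$ for all $i$. For a bitmap $b$ and $q\in\mathbb{R}^d$: $N_b(q)=\lambda e^{-q(1)/2}+\sum_{i:b(i)=1}\sum_{j:i\to j}\mu_{i,j}e^{(q(i)-q(j))/2}+\sum_{i:b(i)=1}\mu_{i,0}e^{q(i)/2}+\sum_{i:b(i)=0}\mu_i$, and $H_b(q)=-2\log N_b(q)$. Simple rates: $m_i(b)=\mu_i$ if $b(i)=1$, and $m_i(b)=\sum_{k:i\to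 k}m_k(b)+\mu'_{i,0}$ if $b(i)=0$ (recursively from the leaves). The simple gradient of $b$ is $q$ with $q(i)=2\log(\Lambda_i/m_i(b))$. *)

theory Defs
  imports Complex_Main
begin

text \<open>Nodes are the naturals 1..d, root 1.  The tree is given by a parent map par:
  for j in {2..d}, par j is the parent of j, i.e. (par j) \<rightarrow> j.  Rates:
  mu i j is mu_{i,j} for an edge i \<rightarrow> j, and mu i 0 is mu_{i,0}.  Bitmaps are
  predicates nat \<Rightarrow> bool, only their values on {1..d} matter.\<close>

definition children :: "(nat \<Rightarrow> nat) \<Rightarrow> nat \<Rightarrow> nat \<Rightarrow> nat set" where
  "children par d i = {j \<in> {2..d}. par j = i}"

definition is_tree :: "(nat \<Rightarrow> nat) \<Rightarrow> nat \<Rightarrow> bool" where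
  "is_tree par d \<longleftrightarrow> 1 \<le> d \<and> (\<forall>j\<in>{2..d}. par j \<in> {1..d})
     \<and> (\<forall>j\<in>{1..d}. \<exists>k. (par ^^ k) j = 1)"

definition mu_tot :: "(nat \<Rightarrow> nat) \<Rightarrow> nat \<Rightarrow> (nat \<Rightarrow> nat \<Rightarrow> real) \<Rightarrow> nat \<Rightarrow> real" where
  "mu_tot par d mu i = (\<Sum>k\<in>children par d i. mu i k) + mu i 0"

text \<open>Lam is the vector of arrival rates (determined uniquely by these equations on a tree).\<close>
definition arrival_rates ::
  "(nat \<Rightarrow> nat) \<Rightarrow> nat \<Rightarrow> real \<Rightarrow> (nat \<Rightarrow> nat \<Rightarrow> real) \<Rightarrow> (nat \<Rightarrow> real) \<Rightarrow> bool" where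
  "arrival_rates par d lam mu Lam \<longleftrightarrow> Lam 1 = lam \<and>
     (\<forall>i\<in>{1..d}. \<forall>j\<in>children par d i. Lam j = Lam i * mu i j / mu_tot par d mu i)"

text \<open>m is the vector of simple rates m_i(b) (determined uniquely by these equations,
  recursively from the leaves).\<close>
definition simple_rates ::
  "(nat \<Rightarrow> nat) \<Rightarrow> nat \<Rightarrow> (nat \<Rightarrow> nat \<Rightarrow> real) \<Rightarrow> (nat \<Rightarrow> real) \<Rightarrow> (nat \<Rightarrow> bool)
     \<Rightarrow> (nat \<Rightarrow> real) \<Rightarrow> bool" where
  "simple_rates par d mu Lam b m \<longleftrightarrow> (\<forall>i\<in>{1..d}. m i =
     (if b i then mu_tot par d mu i
      else (\<Sum>k\<in>children par d i. m k) + Lam i * mu i 0 / mu_tot par d mu i))"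

definition simple_gradient :: "(nat \<Rightarrow> real) \<Rightarrow> (nat \<Rightarrow> real) \<Rightarrow> nat \<Rightarrow> real" where
  "simple_gradient Lam m i = 2 * ln (Lam i / m i)"

definition Nb ::
  "(nat \<Rightarrow> nat) \<Rightarrow> nat \<Rightarrow> real \<Rightarrow> (nat \<Rightarrow> nat \<Rightarrow> real) \<Rightarrow> (nat \<Rightarrow> bool) \<Rightarrow> (nat \<Rightarrow> real) \<Rightarrow> real" where
  "Nb par d lam mu b q =
     lam * exp (- q 1 / 2)
     + (\<Sum>i\<in>{i\<in>{1..d}. b i}. \<Sum>j\<in>children par d i. mu i j * exp ((q i - q j) / 2))
     + (\<Sum>i\<in>{i\<in>{1..d}. b i}. mu i 0 * exp (q i / 2))
     + (\<Sum>i\<in>{i\<in>{1..d}. \<not> b i}. mu_tot par d mu i)"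

definition Hb ::
  "(nat \<Rightarrow> nat) \<Rightarrow> nat \<Rightarrow> real \<Rightarrow> (nat \<Rightarrow> nat \<Rightarrow> real) \<Rightarrow> (nat \<Rightarrow> bool) \<Rightarrow> (nat \<Rightarrow> real) \<Rightarrow> real" where
  "Hb par d lam mu b q = - 2 * ln (Nb par d lam mu b q)"

end

theory Submission
  imports Defs
begin

lemma regroup:
  assumes "\<forall>j\<in>{2..d}. par j \<in> {1..(d::nat)}"
  shows "(\<Sum>i\<in>{1..d}. \<Sum>j\<in>children par d i. f j) = (\<Sum>j\<in>{2..d}. (f j::real))"
  unfolding children_def
  by (rule sum.group) (use assms in auto)

theorem mainTheorem2:
  fixes par :: "nat \<Rightarrow> nat" and d :: nat and lam :: real
    and mu :: "nat \<Rightarrow> nat \<Rightarrow> real" and Lam m :: "nat \<Rightarrow> real"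
    and b b' :: "nat \<Rightarrow> bool"
  assumes tree: "is_tree par d"
    and lam_pos: "lam > 0"
    and mu_edge_pos: "\<forall>i\<in>{1..d}. \<forall>j\<in>children par d i. mu i j > 0"
    and mu_exit_nonneg: "\<forall>i\<in>{1..d}. mu i 0 \<ge> 0"
    and mu_tot_pos: "\<forall>i\<in>{1..d}. mu_tot par d mu i > 0"
    and Lam: "arrival_rates par d lam mu Lam"
    and stable: "\<forall>i\<in>{1..d}. Lam i / mu_tot par d mu i < 1"
    and normalized: "lam + (\<Sum>i\<in>{1..d}. mu_tot par d mu i) = 1"
    and m: "simple_rates par d mu Lam b m"
    and ge: "\<forall>i\<in>{1..d}. b i \<longrightarrow> b' i"
  shows "Hb par d lam mu b' (simple_gradient Lam m) = 0"
proof -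
  let ?D = "{1..d}"
  let ?ch = "children par d"
  let ?M = "mu_tot par d mu"
  have d1: "1 \<le> d" and parD: "\<forall>j\<in>{2..d}. par j \<in> ?D"
    and reach: "\<forall>j\<in>?D. \<exists>k. (par ^^ k) j = 1"
    using tree unfolding is_tree_def by auto
  have chsub: "?ch i \<subseteq> {2..d}" for i unfolding children_def by auto
  have chD: "j \<in> ?D" if "j \<in> ?ch i" for i j using chsub[of i] that by auto
  have finch: "finite (?ch i)" for i using chsub[of i] finite_subset by blast
  have chpar: "j \<in> ?ch (par j)" if "j \<in> {2..d}" for j
    using that unfolding children_def by auto
  define dep where "dep j = (LEAST k. (par ^^ k) j = 1)" for j
  have dep_lt: "dep (par j) < dep j" if j: "j \<in> {2..d}" for j
  proof -
    have "\<exists>k. (par ^^ k) j = 1" using reach j by auto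
    hence h: "(par ^^ dep j) j = 1" unfolding dep_def by (rule LeastI_ex)
    have "dep j \<noteq> 0" proof assume "dep j = 0" thus False using h j by simp qed
    then obtain k where k: "dep j = Suc k" by (cases "dep j") auto
    have "(par ^^ k) (par j) = 1" using h k by (simp only: funpow_Suc_right comp_def)
    hence "dep (par j) \<le> k" unfolding dep_def by (rule Least_le)
    thus ?thesis using k by simp
  qed
  have dep_ch: "dep i < dep j" if "j \<in> ?ch i" for i j
    using that dep_lt chsub unfolding children_def by auto
  have Lam1: "Lam 1 = lam"
    and Lamch: "\<forall>i\<in>?D. \<forall>j\<in>?ch i. Lam j = Lam i * mu i j / ?M i"
    using Lam unfolding arrival_rates_def by auto
  have Lpos_n: "\<forall>i. i \<in> ?D \<longrightarrow> dep i = n \<longrightarrow> Lam i > 0" for n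
  proof (induction n rule: less_induct)
    case (less n)
    show ?case
    proof (intro allI impI)
      fix i assume i: "i \<in> ?D" and di: "dep i = n"
      show "Lam i > 0"
      proof (cases "i = 1")
        case True thus ?thesis using Lam1 lam_pos by simp
      next
        case False
        hence i2: "i \<in> {2..d}" using i by auto
        have p: "par i \<in> ?D" using parD i2 by auto
        have "Lam (par i) > 0" using less[rule_format, OF _ p refl] dep_lt[OF i2] di by auto
        moreover have "Lam i = Lam (par i) * mu (par i) i / ?M (par i)"
          using Lamch p chpar[OF i2] by auto
        moreover have "mu (par i) i > 0" using mu_edge_pos p chpar[OF i2] by auto
        moreover have "?M (par i) > 0" using mu_tot_pos p by auto
        ultimately show ?thesis by simp
      qed
    qed
  qed
  have Lpos: "\<forall>i\<in>?D. Lam i > 0" using Lpos_n by blast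
  have mdef: "\<forall>i\<in>?D. m i = (if b i then ?M i
      else (\<Sum>k\<in>?ch i. m k) + Lam i * mu i 0 / ?M i)"
    using m unfolding simple_rates_def by auto
  have mpos: "\<forall>i\<in>?D. m i > 0"
  proof (rule ccontr)
    assume nt: "\<not> (\<forall>i\<in>?D. m i > 0)"
    define B where "B = {i\<in>?D. m i \<le> 0}"
    have Bne: "B \<noteq> {}" using nt unfolding B_def by auto
    have fB: "finite B" unfolding B_def by auto
    define n where "n = Max (dep ` B)"
    have "n \<in> dep ` B" unfolding n_def using Bne fB by auto
    then obtain i where iB: "i \<in> B" and di: "dep i = n" by auto
    have chpos: "m j > 0" if j: "j \<in> ?ch i" for j
    proof (rule ccontr)
      assume "\<not> m j > 0"
      hence "j \<in> B" unfolding B_def using chD[OF j] by auto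
      hence "dep j \<le> n" unfolding n_def using fB by auto
      thus False using dep_ch[OF j] di by simp
    qed
    have iD: "i \<in> ?D" and mi: "m i \<le> 0" using iB unfolding B_def by auto
    show False
    proof (cases "b i")
      case True thus ?thesis using mdef iD mi mu_tot_pos by fastforce
    next
      case False
      have e: "m i = (\<Sum>k\<in>?ch i. m k) + Lam i * mu i 0 / ?M i" using mdef iD False by auto
      have t: "Lam i * mu i 0 / ?M i \<ge> 0"
        using Lpos iD mu_exit_nonneg mu_tot_pos
        by (intro divide_nonneg_pos mult_nonneg_nonneg) (auto intro: less_imp_le)
      show ?thesis
      proof (cases "?ch i = {}")
        case True
        hence "?M i = mu i 0" unfolding mu_tot_def by simp
        hence "mu i 0 > 0" using mu_tot_pos iD by fastforce
        hence "Lam i * mu i 0 / ?M i > 0" using Lpos iD mu_tot_pos by auto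
        thus ?thesis using e True mi by simp
      next
        case False
        have "(\<Sum>k\<in>?ch i. m k) > 0" using chpos False finch by (intro sum_pos) auto
        thus ?thesis using e t mi by simp
      qed
    qed
  qed
  let ?q = "simple_gradient Lam m"
  have e1: "exp (?q i / 2) = Lam i / m i" if "i \<in> ?D" for i
    using Lpos mpos that by (simp add: simple_gradient_def)
  have e2: "exp (- ?q i / 2) = m i / Lam i" if "i \<in> ?D" for i
  proof -
    have "exp (- ?q i / 2) = inverse (exp (?q i / 2))"
      by (simp add: exp_minus[symmetric])
    thus ?thesis using e1[OF that] by simp
  qed
  have e3: "mu i j * exp ((?q i - ?q j) / 2) = ?M i * m j / m i"
    if i: "i \<in> ?D" and j: "j \<in> ?ch i" for i j
  proof -
    have jD: "j \<in> ?D" using chD[OF j] .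
    have "exp ((?q i - ?q j) / 2) = exp (?q i / 2) / exp (?q j / 2)"
      by (simp add: diff_divide_distrib exp_diff)
    also have "\<dots> = (Lam i / m i) / (Lam j / m j)" using e1 i jD by simp
    finally have x: "exp ((?q i - ?q j) / 2) = (Lam i / m i) / (Lam j / m j)" .
    have Lj: "Lam j = Lam i * mu i j / ?M i" using Lamch i j by auto
    have pos: "Lam i > 0" "m i > 0" "m j > 0" "mu i j > 0" "?M i > 0"
      using Lpos i apply blast
      using mpos i apply blast
      using mpos jD apply blast
      using mu_edge_pos i j apply blast
      using mu_tot_pos i by blast
    show ?thesis unfolding x Lj using pos by (simp add: field_simps)
  qed
  define T where "T i = (\<Sum>k\<in>?ch i. m k) + Lam i * mu i 0 / ?M i" for i
  define F where "F i = (if b i then T i else ?M i)" for i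
  have inner: "(\<Sum>j\<in>?ch i. mu i j * exp ((?q i - ?q j) / 2)) + mu i 0 * exp (?q i / 2) = F i"
    if i: "i \<in> ?D" for i
  proof -
    have "(\<Sum>j\<in>?ch i. mu i j * exp ((?q i - ?q j) / 2)) = (\<Sum>j\<in>?ch i. ?M i * m j / m i)"
      using e3 i by (intro sum.cong) auto
    also have "\<dots> = ?M i / m i * (\<Sum>j\<in>?ch i. m j)" by (simp add: sum_distrib_left)
    finally have s: "(\<Sum>j\<in>?ch i. mu i j * exp ((?q i - ?q j) / 2)) = ?M i / m i * (\<Sum>j\<in>?ch i. m j)" .
    have pos: "m i > 0" "?M i > 0" using mpos mu_tot_pos i by auto
    have "(\<Sum>j\<in>?ch i. mu i j * exp ((?q i - ?q j) / 2)) + mu i 0 * exp (?q i / 2)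
        = ?M i / m i * T i"
      unfolding s e1[OF i] T_def using pos by (simp add: field_simps)
    also have "\<dots> = F i"
    proof (cases "b i")
      case True thus ?thesis using mdef i pos unfolding F_def T_def by auto
    next
      case False
      hence "m i = T i" using mdef i unfolding T_def by auto
      thus ?thesis using False pos unfolding F_def by simp
    qed
    finally show ?thesis .
  qed
  have FT: "F i = T i + ?M i - m i" if i: "i \<in> ?D" for i
    using mdef i unfolding F_def T_def by auto
  have finD: "finite {i\<in>?D. b' i}" "finite {i\<in>?D. \<not> b' i}" by auto
  have N1: "Nb par d lam mu b' ?q = m 1 + (\<Sum>i\<in>?D. F i)"
  proof -
    have a: "lam * exp (- ?q 1 / 2) = m 1" using e2[of 1] d1 Lam1 lam_pos by simp
    have "(\<Sum>i\<in>{i\<in>?D. b' i}. \<Sum>j\<in>?ch i. mu i j * exp ((?q i - ?q j) / 2))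
        + (\<Sum>i\<in>{i\<in>?D. b' i}. mu i 0 * exp (?q i / 2))
        = (\<Sum>i\<in>{i\<in>?D. b' i}. F i)"
      by (simp add: sum.distrib[symmetric] inner)
    moreover have "(\<Sum>i\<in>{i\<in>?D. \<not> b' i}. ?M i) = (\<Sum>i\<in>{i\<in>?D. \<not> b' i}. F i)"
      using ge unfolding F_def by (intro sum.cong) auto
    moreover have "(\<Sum>i\<in>{i\<in>?D. b' i}. F i) + (\<Sum>i\<in>{i\<in>?D. \<not> b' i}. F i) = (\<Sum>i\<in>?D. F i)"
      by (rule sum.union_disjoint[symmetric, THEN trans]) (auto intro: sum.cong)
    ultimately show ?thesis unfolding Nb_def a by linarith
  qed
  have sumD: "(\<Sum>i\<in>?D. g i) = g 1 + (\<Sum>i\<in>{2..d}. g i)" for g :: "nat \<Rightarrow> real"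
  proof -
    have "?D = insert 1 {2..d}" using d1 by auto
    thus ?thesis by simp
  qed
  have flow: "(\<Sum>i\<in>?D. Lam i * mu i 0 / ?M i) = lam"
  proof -
    have li: "Lam i = (\<Sum>j\<in>?ch i. Lam j) + Lam i * mu i 0 / ?M i" if i: "i \<in> ?D" for i
    proof -
      have "(\<Sum>j\<in>?ch i. Lam j) = (\<Sum>j\<in>?ch i. Lam i / ?M i * mu i j)"
        using Lamch i by (intro sum.cong) auto
      also have "\<dots> = Lam i / ?M i * (\<Sum>j\<in>?ch i. mu i j)" by (simp add: sum_distrib_left)
      finally have "(\<Sum>j\<in>?ch i. Lam j) + Lam i * mu i 0 / ?M i
          = Lam i / ?M i * ((\<Sum>j\<in>?ch i. mu i j) + mu i 0)" by (simp add: algebra_simps add_divide_distrib)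
      also have "\<dots> = Lam i"
      proof -
        have "(\<Sum>j\<in>?ch i. mu i j) + mu i 0 = ?M i" unfolding mu_tot_def by simp
        moreover have "?M i > 0" using mu_tot_pos i by auto
        ultimately show ?thesis by simp
      qed
      finally show ?thesis by simp
    qed
    have "(\<Sum>i\<in>?D. Lam i) = (\<Sum>i\<in>?D. \<Sum>j\<in>?ch i. Lam j) + (\<Sum>i\<in>?D. Lam i * mu i 0 / ?M i)"
    proof -
      have "(\<Sum>i\<in>?D. Lam i) = (\<Sum>i\<in>?D. (\<Sum>j\<in>?ch i. Lam j) + Lam i * mu i 0 / ?M i)"
        using li by (intro sum.cong) auto
      thus ?thesis by (simp add: sum.distrib)
    qed
    also have "(\<Sum>i\<in>?D. \<Sum>j\<in>?ch i. Lam j) = (\<Sum>j\<in>{2..d}. Lam j)" using regroup[OF parD] .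
    finally show ?thesis using sumD[of Lam] Lam1 by simp
  qed
  have sumT: "(\<Sum>i\<in>?D. T i) = (\<Sum>i\<in>?D. m i) - m 1 + lam"
  proof -
    have "(\<Sum>i\<in>?D. T i) = (\<Sum>i\<in>?D. \<Sum>j\<in>?ch i. m j) + (\<Sum>i\<in>?D. Lam i * mu i 0 / ?M i)"
      unfolding T_def by (simp add: sum.distrib)
    also have "(\<Sum>i\<in>?D. \<Sum>j\<in>?ch i. m j) = (\<Sum>j\<in>{2..d}. m j)" using regroup[OF parD] .
    finally show ?thesis using flow sumD[of m] by simp
  qed
  have "(\<Sum>i\<in>?D. F i) = (\<Sum>i\<in>?D. T i + ?M i - m i)" using FT by (intro sum.cong) auto
  also have "\<dots> = (\<Sum>i\<in>?D. T i) + (\<Sum>i\<in>?D. ?M i) - (\<Sum>i\<in>?D. m i)"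
    by (simp add: sum.distrib sum_subtractf)
  finally have "Nb par d lam mu b' ?q = 1" using N1 sumT normalized by simp
  thus ?thesis unfolding Hb_def by simp
qed

end
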